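(* Let $W$ be a finite set and let $\preceq_1$ and $\preceq_2$ be total preorders on $W$. Then there is exactly one binary relation $\preceq_3$ on $W$ satisfying (RE1)–(RE3) with respect to $\preceq_1,\preceq_2$; consequently there is a unique revision operator $\circ$ (mapping pairs of total preorders to a relation $\preceq_1\circ\preceq_2=\preceq_3$) satisfying (RE1)–(RE3).
   Context: A total preorder on $W$ is a reflexive, transitive relation under which any two elements are comparable. For a preorder $\preceq_i$ write $\omega\prec_i\omega'$ iff $\omega\preceq_i\omega'$ and not $\omega'\preceq_i\omega$, and $\omega\sim_i\omega'$ iff $\omega\preceq_i\omega'$ and $\omega'\preceq_i\omega$; $\prec_i$ denotes the strict part $\{(x,y)\mid x\prec_i y\}$. The postulates for $\preceq_3=\preceq_1\circ\preceq_2$ are: (RE1) $\preceq_3$ is a total preorder; (RE2) $\prec_2\subseteq\prec_3$; (RE3) if $\omega\sim_2\omega'$, then $\omega\prec_3\omega'$ iff $\omega\prec_1\omega'$. *)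

theory Defs
  imports Main
begin

definition total_preorder_on :: "'a set \<Rightarrow> 'a rel \<Rightarrow> bool" where
  "total_preorder_on W R \<longleftrightarrow>
     R \<subseteq> W \<times> W \<and> (\<forall>x\<in>W. (x, x) \<in> R) \<and> trans R \<and>
     (\<forall>x\<in>W. \<forall>y\<in>W. (x, y) \<in> R \<or> (y, x) \<in> R)"

definition strict_part :: "'a rel \<Rightarrow> 'a rel" where
  "strict_part R = {(x, y). (x, y) \<in> R \<and> (y, x) \<notin> R}"

definition RE1 :: "'a set \<Rightarrow> 'a rel \<Rightarrow> bool" where
  "RE1 W R3 \<longleftrightarrow> total_preorder_on W R3"

definition RE2 :: "'a rel \<Rightarrow> 'a rel \<Rightarrow> bool" where
  "RE2 R2 R3 \<longleftrightarrow> strict_part R2 \<subseteq> strict_part R3"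

definition RE3 :: "'a rel \<Rightarrow> 'a rel \<Rightarrow> 'a rel \<Rightarrow> bool" where
  "RE3 R1 R2 R3 \<longleftrightarrow>
     (\<forall>w w'. (w, w') \<in> R2 \<and> (w', w) \<in> R2 \<longrightarrow>
        ((w, w') \<in> strict_part R3 \<longleftrightarrow> (w, w') \<in> strict_part R1))"

definition satisfies_RE :: "'a set \<Rightarrow> 'a rel \<Rightarrow> 'a rel \<Rightarrow> 'a rel \<Rightarrow> bool" where
  "satisfies_RE W R1 R2 R3 \<longleftrightarrow> RE1 W R3 \<and> RE2 R2 R3 \<and> RE3 R1 R2 R3"

end

theory Submission
  imports Defs
begin

definition lexr :: "'a rel \<Rightarrow> 'a rel \<Rightarrow> 'a rel" where
  "lexr R1 R2 = {(x, y). (x, y) \<in> R2 \<and> ((y, x) \<notin> R2 \<or> (x, y) \<in> R1)}"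

lemma lexr_sat:
  assumes "total_preorder_on W R1" "total_preorder_on W R2"
  shows "satisfies_RE W R1 R2 (lexr R1 R2)"
proof -
  have A: "R1 \<subseteq> W \<times> W" "\<forall>x\<in>W. (x, x) \<in> R1" "trans R1"
     "\<forall>x\<in>W. \<forall>y\<in>W. (x, y) \<in> R1 \<or> (y, x) \<in> R1"
    using assms(1) unfolding total_preorder_on_def by auto
  have B: "R2 \<subseteq> W \<times> W" "\<forall>x\<in>W. (x, x) \<in> R2" "trans R2"
     "\<forall>x\<in>W. \<forall>y\<in>W. (x, y) \<in> R2 \<or> (y, x) \<in> R2"
    using assms(2) unfolding total_preorder_on_def by auto
  have tr: "trans (lexr R1 R2)"
  proof (rule transI)
    fix x y z assume xy: "(x,y) \<in> lexr R1 R2" and yz: "(y,z) \<in> lexr R1 R2"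
    have xz2: "(x,z) \<in> R2" using xy yz B(3) unfolding lexr_def trans_def by blast
    show "(x,z) \<in> lexr R1 R2"
    proof (cases "(z,x) \<in> R2")
      case False then show ?thesis using xz2 unfolding lexr_def by simp
    next
      case True
      have "(y,x) \<in> R2" using True yz B(3) unfolding lexr_def trans_def by blast
      moreover have "(z,y) \<in> R2" using True xy B(3) unfolding lexr_def trans_def by blast
      ultimately have "(x,y) \<in> R1" "(y,z) \<in> R1" using xy yz unfolding lexr_def by auto
      then show ?thesis using xz2 A(3) unfolding lexr_def trans_def by blast
    qed
  qed
  have tp: "total_preorder_on W (lexr R1 R2)"
    unfolding total_preorder_on_def
  proof (intro conjI)
    show "lexr R1 R2 \<subseteq> W \<times> W" using B(1) unfolding lexr_def by auto
    show "\<forall>x\<in>W. (x, x) \<in> lexr R1 R2" using A(2) B(2) unfolding lexr_def by auto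
    show "\<forall>x\<in>W. \<forall>y\<in>W. (x, y) \<in> lexr R1 R2 \<or> (y, x) \<in> lexr R1 R2"
      using A(4) B(4) unfolding lexr_def by auto
  qed (rule tr)
  have "RE2 R2 (lexr R1 R2)" unfolding RE2_def strict_part_def lexr_def by auto
  moreover have "RE3 R1 R2 (lexr R1 R2)" unfolding RE3_def strict_part_def lexr_def by auto
  ultimately show ?thesis using tp unfolding satisfies_RE_def RE1_def by simp
qed

lemma sat_lexr:
  assumes "total_preorder_on W R1" "total_preorder_on W R2" "satisfies_RE W R1 R2 R3"
  shows "R3 = lexr R1 R2"
proof -
  have t1: "R1 \<subseteq> W \<times> W" "\<forall>x\<in>W. \<forall>y\<in>W. (x, y) \<in> R1 \<or> (y, x) \<in> R1"
    using assms(1) unfolding total_preorder_on_def by auto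
  have t2: "R2 \<subseteq> W \<times> W" "\<forall>x\<in>W. \<forall>y\<in>W. (x, y) \<in> R2 \<or> (y, x) \<in> R2"
    using assms(2) unfolding total_preorder_on_def by auto
  have t3: "R3 \<subseteq> W \<times> W" "\<forall>x\<in>W. \<forall>y\<in>W. (x, y) \<in> R3 \<or> (y, x) \<in> R3"
    using assms(3) unfolding satisfies_RE_def RE1_def total_preorder_on_def by auto
  have r2: "\<And>x y. (x,y) \<in> R2 \<Longrightarrow> (y,x) \<notin> R2 \<Longrightarrow> (x,y) \<in> R3 \<and> (y,x) \<notin> R3"
    using assms(3) unfolding satisfies_RE_def RE2_def strict_part_def by blast
  have r3: "\<And>x y. (x,y) \<in> R2 \<Longrightarrow> (y,x) \<in> R2 \<Longrightarrow>
      (((x,y) \<in> R3 \<and> (y,x) \<notin> R3) \<longleftrightarrow> ((x,y) \<in> R1 \<and> (y,x) \<notin> R1))"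
    using assms(3) unfolding satisfies_RE_def RE3_def strict_part_def by blast
  show ?thesis
  proof (rule set_eqI, clarify)
    fix x y
    show "(x,y) \<in> R3 \<longleftrightarrow> (x,y) \<in> lexr R1 R2"
    proof (cases "x \<in> W \<and> y \<in> W")
      case False
      then show ?thesis using t2 t3 unfolding lexr_def by auto
    next
      case True
      then have a: "(x,y) \<in> R2 \<or> (y,x) \<in> R2" "(x,y) \<in> R1 \<or> (y,x) \<in> R1"
                "(x,y) \<in> R3 \<or> (y,x) \<in> R3"
        using t1 t2 t3 by auto
      have "(x,y) \<in> R3 \<longleftrightarrow> (x,y) \<in> R2 \<and> ((y,x) \<notin> R2 \<or> (x,y) \<in> R1)"
      proof (cases "(x,y) \<in> R2")
        case False
        then show ?thesis using a(1) r2[of y x] by blast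
      next
        case xy: True
        show ?thesis
        proof (cases "(y,x) \<in> R2")
          case False then show ?thesis using xy r2[of x y] by blast
        next
          case yx: True
          show ?thesis
          proof (cases "(x,y) \<in> R1")
            case True
            show ?thesis
            proof (cases "(y,x) \<in> R1")
              case True
              then show ?thesis using a(3) r3[of x y] r3[of y x] xy yx \<open>(x,y) \<in> R1\<close> by blast
            next
              case False
              then show ?thesis using r3[of x y] xy yx \<open>(x,y) \<in> R1\<close> by blast
            qed
          next
            case False
            then show ?thesis using a(2) r3[of y x] xy yx by blast
          qed
        qed
      qed
      then show ?thesis unfolding lexr_def by simp
    qed
  qed
qed

theorem theorem3:
  fixes W :: "'a set"
  assumes "finite W"
  shows "(\<forall>R1 R2. total_preorder_on W R1 \<and> total_preorder_on W R2 \<longrightarrow>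
            (\<exists>!R3. satisfies_RE W R1 R2 R3))
       \<and> (\<exists>op :: 'a rel \<Rightarrow> 'a rel \<Rightarrow> 'a rel.
            \<forall>R1 R2. total_preorder_on W R1 \<and> total_preorder_on W R2 \<longrightarrow>
              satisfies_RE W R1 R2 (op R1 R2))
       \<and> (\<forall>op op' :: 'a rel \<Rightarrow> 'a rel \<Rightarrow> 'a rel.
            (\<forall>R1 R2. total_preorder_on W R1 \<and> total_preorder_on W R2 \<longrightarrow>
               satisfies_RE W R1 R2 (op R1 R2)) \<longrightarrow>
            (\<forall>R1 R2. total_preorder_on W R1 \<and> total_preorder_on W R2 \<longrightarrow>
               satisfies_RE W R1 R2 (op' R1 R2)) \<longrightarrow>
            (\<forall>R1 R2. total_preorder_on W R1 \<and> total_preorder_on W R2 \<longrightarrow>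
               op R1 R2 = op' R1 R2))"
proof (intro conjI allI impI)
  fix R1 R2 :: "'a rel" assume h: "total_preorder_on W R1 \<and> total_preorder_on W R2"
  show "\<exists>!R3. satisfies_RE W R1 R2 R3"
  proof (rule ex1I)
    show "satisfies_RE W R1 R2 (lexr R1 R2)" using h lexr_sat by blast
    fix R3 assume "satisfies_RE W R1 R2 R3"
    then show "R3 = lexr R1 R2" using h sat_lexr by blast
  qed
next
  show "\<exists>op :: 'a rel \<Rightarrow> 'a rel \<Rightarrow> 'a rel.
            \<forall>R1 R2. total_preorder_on W R1 \<and> total_preorder_on W R2 \<longrightarrow>
              satisfies_RE W R1 R2 (op R1 R2)"
    by (rule exI[of _ lexr], intro allI impI, rule lexr_sat, auto)
next
  fix op op' :: "'a rel \<Rightarrow> 'a rel \<Rightarrow> 'a rel" and R1 R2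
  assume o1: "\<forall>R1 R2. total_preorder_on W R1 \<and> total_preorder_on W R2 \<longrightarrow>
               satisfies_RE W R1 R2 (op R1 R2)"
     and o2: "\<forall>R1 R2. total_preorder_on W R1 \<and> total_preorder_on W R2 \<longrightarrow>
               satisfies_RE W R1 R2 (op' R1 R2)"
     and h: "total_preorder_on W R1 \<and> total_preorder_on W R2"
  have "op R1 R2 = lexr R1 R2" using o1 h sat_lexr by blast
  moreover have "op' R1 R2 = lexr R1 R2" using o2 h sat_lexr by blast
  ultimately show "op R1 R2 = op' R1 R2" by simp
qed

end
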